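(* Let $\mathbf b=(b_1,b_2)\in\mathbb N^2$ with $\gcd(b_1,b_2)=1$ and $b_1\le b_2$. Let $J\in\mathbb N$, $\mathbf s=(s_1,\dots,s_J)\in\mathbb Z^J$, and $s_0=\max_{1\le j\le J}|s_j|$. For integers $n>s_0$ define $$f_{\mathbf b,\mathbf s}(n)=\sum_{\substack{d_1,\dots,d_J\in\mathbb N,\ d_j^{b_1}\mid n-s_j\ (1\le j\le J)\\ \gcd(d_{j_1},d_{j_2})=1\ \forall\, 1\le j_1\ne j_2\le J}}\frac{\mu(d_1)\cdots\mu(d_J)}{(d_1\cdots d_J)^{b_2}}.$$ Then for $x\ge2$, $$\sum_{s_0<n\le x}f_{\mathbf b,\mathbf s}(n)=x\prod_p\Big(1-\frac{J}{p^{b_1+b_2}}\Big)+O_{\mathbf b,\mathbf s}\big(\log^J x\big),$$ where $p$ runs over all primes.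
   Context: $\mu$ denotes the Möbius function. *)

theory Defs
  imports "HOL-Analysis.Analysis" "HOL-Computational_Algebra.Computational_Algebra"
begin

definition moebius_mu :: "nat \<Rightarrow> int" where
  "moebius_mu n = (if n = 0 \<or> \<not> squarefree n then 0 else (-1) ^ card (prime_factors n))"

definition s0 :: "nat \<Rightarrow> (nat \<Rightarrow> int) \<Rightarrow> int" where
  "s0 J s = Max ((\<lambda>j. \<bar>s j\<bar>) ` {1..J})"

text \<open>Admissible tuples (d_1,...,d_J) of positive integers, encoded as functions
  nat => nat that are 1 outside {1..J}.\<close>
definition adm_tuples :: "nat \<Rightarrow> nat \<Rightarrow> (nat \<Rightarrow> int) \<Rightarrow> int \<Rightarrow> (nat \<Rightarrow> nat) set" where
  "adm_tuples b1 J s n =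
     {d. (\<forall>j\<in>{1..J}. d j > 0 \<and> int (d j ^ b1) dvd (n - s j)) \<and>
         (\<forall>j1\<in>{1..J}. \<forall>j2\<in>{1..J}. j1 \<noteq> j2 \<longrightarrow> coprime (d j1) (d j2)) \<and>
         (\<forall>j. j \<notin> {1..J} \<longrightarrow> d j = 1)}"

definition f_bs :: "nat \<Rightarrow> nat \<Rightarrow> nat \<Rightarrow> (nat \<Rightarrow> int) \<Rightarrow> int \<Rightarrow> real" where
  "f_bs b1 b2 J s n =
     (\<Sum>d\<in>adm_tuples b1 J s n.
        (\<Prod>j\<in>{1..J}. real_of_int (moebius_mu (d j))) / (\<Prod>j\<in>{1..J}. real (d j)) ^ b2)"

end

theory Submission
  imports Defs "HOL-Number_Theory.Cong"
begin


lemma sum_inv_sq_tail: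
  fixes Y n :: nat assumes "Y \<ge> 1"
  shows "(\<Sum>k\<in>{Suc Y..Y+n}. 1 / real k ^ 2) \<le> 1 / real Y - 1 / real (Y + n)"
proof (induction n)
  case 0 then show ?case by simp
next
  case (Suc n)
  have "(\<Sum>k\<in>{Suc Y..Y+Suc n}. 1 / real k ^ 2) = (\<Sum>k\<in>{Suc Y..Y+n}. 1 / real k ^ 2) + 1 / real (Y + Suc n) ^ 2"
    by (simp add: add_Suc_right)
  also have "1 / real (Y + Suc n) ^ 2 \<le> 1 / real (Y + n) - 1 / real (Y + Suc n)"
  proof -
    have p: "real (Y + n) > 0" using assms by simp
    have "1 / real (Y + n) - 1 / real (Y + Suc n) = 1 / (real (Y+n) * real (Y + Suc n))"
      using p by (simp add: field_simps)
    also have "\<dots> \<ge> 1 / real (Y + Suc n) ^ 2"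
      using p by (intro divide_left_mono) (auto simp: power2_eq_square intro!: mult_right_mono)
    finally show ?thesis .
  qed
  finally show ?case using Suc by simp
qed

lemma sum_inv_sq_tail':
  fixes Y M :: nat assumes "Y \<ge> 1"
  shows "(\<Sum>k\<in>{Suc Y..M}. 1 / real k ^ 2) \<le> 1 / real Y"
proof (cases "M \<ge> Y")
  case True
  then obtain n where "M = Y + n" using le_Suc_ex by blast
  have h: "0 \<le> 1 / (real Y + real n)" by simp
  have s: "(\<Sum>k\<in>{Suc Y..Y+n}. 1 / real k ^ 2) \<le> 1 / real Y - 1 / (real Y + real n)"
    using sum_inv_sq_tail[OF assms, of n] by simp
  show ?thesis unfolding \<open>M = Y + n\<close> using h s by linarith
next
  case False then show ?thesis by simp
qed

lemma sum_inv_sq_le2: "(\<Sum>k\<in>{1..M}. 1 / real k ^ 2) \<le> 2"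
proof (cases "M \<ge> 1")
  case True
  have "{1..M} = insert 1 {Suc 1..M}" using True by auto
  then have "(\<Sum>k\<in>{1..M}. 1 / real k ^ 2) = 1 + (\<Sum>k\<in>{Suc 1..M}. 1 / real k ^ 2)" by simp
  also have "\<dots> \<le> 1 + 1" using sum_inv_sq_tail'[of 1 M] by simp
  finally show ?thesis by simp
qed simp

lemma harm_le_ln: "(\<Sum>k\<in>{1..Y}. 1 / real k) \<le> 1 + ln (real Y)" if "Y \<ge> 1" for Y :: nat
  using that
proof (induction Y rule: dec_induct)
  case base then show ?case by simp
next
  case (step n)
  have p: "real n > 0" using step by simp
  have "ln (real n / real (Suc n)) \<le> real n / real (Suc n) - 1"
    using p by (intro ln_le_minus_one) auto
  also have "\<dots> = - 1 / real (Suc n)" by (simp add: field_simps)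
  finally have "1 / real (Suc n) \<le> ln (real (Suc n)) - ln (real n)"
    using p by (simp add: ln_div)
  then show ?case using step by simp
qed



definition box :: "nat set \<Rightarrow> (nat \<Rightarrow> nat set) \<Rightarrow> (nat \<Rightarrow> nat) set" where
 "box I A = {d. (\<forall>j\<in>I. d j \<in> A j) \<and> (\<forall>j. j\<notin>I \<longrightarrow> d j = 1)}"

lemma box_eq_image: "box I A = (\<lambda>h j. if j \<in> I then h j else 1) ` PiE I A"
proof (intro equalityI subsetI)
  fix d assume d: "d \<in> box I A"
  then have "d = (\<lambda>j. if j \<in> I then restrict d I j else 1)" by (auto simp: box_def fun_eq_iff)
  moreover have "restrict d I \<in> PiE I A" using d by (auto simp: box_def)
  ultimately show "d \<in> (\<lambda>h j. if j \<in> I then h j else 1) ` PiE I A" by blast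
qed (auto simp: box_def PiE_def)

lemma box_inj: "inj_on (\<lambda>h j. if j \<in> I then h j else 1) (PiE I A)"
  by (auto simp: inj_on_def fun_eq_iff PiE_def extensional_def) metis

lemma finite_box: "finite I \<Longrightarrow> (\<And>j. j\<in>I \<Longrightarrow> finite (A j)) \<Longrightarrow> finite (box I A)"
  unfolding box_eq_image by (intro finite_imageI finite_PiE) auto

lemma box_sum:
  fixes g :: "nat \<Rightarrow> nat \<Rightarrow> 'c :: comm_semiring_1"
  assumes "finite I" "\<And>j. j\<in>I \<Longrightarrow> finite (A j)"
  shows "(\<Sum>d\<in>box I A. \<Prod>j\<in>I. g j (d j)) = (\<Prod>j\<in>I. \<Sum>k\<in>A j. g j k)"
proof -
  have "(\<Sum>d\<in>box I A. \<Prod>j\<in>I. g j (d j)) =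
        (\<Sum>h\<in>PiE I A. \<Prod>j\<in>I. g j ((\<lambda>j. if j \<in> I then h j else 1) j))"
    unfolding box_eq_image by (subst sum.reindex[OF box_inj]) simp
  also have "\<dots> = (\<Sum>h\<in>PiE I A. \<Prod>j\<in>I. g j (h j))"
    by (intro sum.cong prod.cong) auto
  also have "\<dots> = (\<Prod>j\<in>I. \<Sum>k\<in>A j. g j k)"
    using assms by (intro prod_sum_PiE[symmetric]) auto
  finally show ?thesis .
qed

lemma tail_bound:
  fixes F :: "(nat\<Rightarrow>nat) set" and Y J :: nat
  assumes F: "finite F" and Y: "Y \<ge> 1"
   and Fd: "\<And>d. d\<in>F \<Longrightarrow> (\<forall>j\<in>{1..J}. d j \<ge> 1) \<and> (\<forall>j. j\<notin>{1..J} \<longrightarrow> d j = 1) \<and> (\<exists>j\<in>{1..J}. d j > Y)"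
  shows "(\<Sum>d\<in>F. \<Prod>j\<in>{1..J}. 1 / real (d j) ^ 2) \<le> real J * 2^J / real Y"
proof -
  define h where "h d = (\<Prod>j\<in>{1..J}. 1 / real (d j) ^ 2)" for d :: "nat \<Rightarrow> nat"
  have hnn: "h d \<ge> 0" for d unfolding h_def by (intro prod_nonneg) auto
  define M where "M = Max (insert 0 (\<Union>d\<in>F. d ` {1..J}))"
  have M: "d j \<le> M" if "d \<in> F" "j \<in> {1..J}" for d j
  proof -
    have "d j \<in> insert 0 (\<Union>d\<in>F. d ` {1..J})" using that by blast
    then show ?thesis unfolding M_def by (rule Max_ge[rotated]) (use F in auto)
  qed
  define A where "A j i = (if i = j then {Suc Y..M} else {1..M})" for j i :: nat
  have "(\<Sum>d\<in>F. h d) \<le> (\<Sum>d\<in>F. \<Sum>j\<in>{1..J}. (if d j > Y then h d else 0))"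
  proof (intro sum_mono)
    fix d assume "d \<in> F"
    then obtain j0 where j0: "j0 \<in> {1..J}" "d j0 > Y" using Fd by blast
    have "h d = (if d j0 > Y then h d else 0)" using j0 by simp
    also have "\<dots> \<le> (\<Sum>j\<in>{1..J}. (if d j > Y then h d else 0))"
      by (rule member_le_sum[OF j0(1)]) (auto simp: hnn)
    finally show "h d \<le> (\<Sum>j\<in>{1..J}. (if d j > Y then h d else 0))" .
  qed
  also have "\<dots> = (\<Sum>j\<in>{1..J}. \<Sum>d\<in>F. (if d j > Y then h d else 0))"
    by (rule sum.swap)
  also have "\<dots> \<le> (\<Sum>j\<in>{1..J}. 2^J / real Y)"
  proof (intro sum_mono)
    fix j assume j: "j \<in> {1..J}"
    have "(\<Sum>d\<in>F. (if d j > Y then h d else 0)) = (\<Sum>d\<in>{d\<in>F. d j > Y}. h d)"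
      using F by (simp add: sum.inter_filter)
    also have "\<dots> \<le> (\<Sum>d\<in>box {1..J} (A j). h d)"
    proof (intro sum_mono2 finite_box)
      show "{d \<in> F. Y < d j} \<subseteq> box {1..J} (A j)"
      proof
        fix d assume d: "d \<in> {d \<in> F. Y < d j}"
        then show "d \<in> box {1..J} (A j)"
          using Fd[of d] M[of d] by (auto simp: box_def A_def Suc_le_eq)
      qed
    qed (auto simp: A_def hnn)
    also have "\<dots> = (\<Prod>i\<in>{1..J}. \<Sum>k\<in>A j i. 1 / real k ^ 2)"
      unfolding h_def by (rule box_sum) (auto simp: A_def)
    also have "\<dots> \<le> (\<Prod>i\<in>{1..J}. (if i = j then 1 / real Y else 2))"
      using sum_inv_sq_tail'[OF Y, of M] sum_inv_sq_le2[of M]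
      by (intro prod_mono) (auto simp: A_def sum_nonneg)
    also have "\<dots> = (1 / real Y) * (\<Prod>i\<in>{1..J}-{j}. (if i = j then 1 / real Y else 2))"
      using j by (subst prod.remove[of _ j]) auto
    also have "(\<Prod>i\<in>{1..J}-{j}. (if i = j then 1 / real Y else 2)) = (2::real) ^ card ({1..J}-{j})"
      by (subst prod.cong[where h = "\<lambda>_. 2"]) auto
    also have "(2::real) ^ card ({1..J}-{j}) \<le> 2 ^ J"
      using card_mono[of "{1..J}" "{1..J}-{j}"] by (intro power_increasing) auto
    finally show "(\<Sum>d\<in>F. (if d j > Y then h d else 0)) \<le> 2^J / real Y"
      using Y by (simp add: divide_right_mono)
  qed
  also have "\<dots> = real J * 2^J / real Y" by simp
  finally show ?thesis unfolding h_def .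
qed



lemma sqf_prod_pf:
  fixes n :: nat assumes "squarefree n" "n > 0"
  shows "(\<Prod>p\<in>prime_factors n. p) = n"
proof -
  have "prime_factorization n = mset_set (prime_factors n)"
  proof (rule multiset_eqI)
    fix p
    show "count (prime_factorization n) p = count (mset_set (prime_factors n)) p"
      using assms squarefree_factorial_semiring'[of n]
      by (cases "p \<in> prime_factors n") (auto simp: count_prime_factorization count_mset_set in_prime_factors_iff not_dvd_imp_multiplicity_0)
  qed
  then have "n = prod_mset (mset_set (prime_factors n))"
    using prod_mset_prime_factorization_nat[of n] assms by simp
  then show ?thesis by (simp add: prod_unfold_prod_mset)
qed

lemma prod_primes_dvd_iff:
  fixes S :: "nat set" assumes "finite S" "\<And>q. q \<in> S \<Longrightarrow> prime q" "prime p"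
  shows "p dvd (\<Prod>q\<in>S. q) \<longleftrightarrow> p \<in> S"
proof
  assume "p dvd (\<Prod>q\<in>S. q)"
  then obtain q where "q \<in> S" "p dvd q" using assms
    by (metis prime_dvd_prod_iff)
  then show "p \<in> S" using assms by (metis primes_dvd_imp_eq)
qed (use assms in \<open>auto intro: dvd_prodI\<close>)

lemma prod_primes_pos:
  fixes S :: "nat set" assumes "\<And>q. q \<in> S \<Longrightarrow> prime q"
  shows "(\<Prod>q\<in>S. q) > 0"
  using assms by (metis prime_gt_0_nat prod_pos)

lemma prod_primes_sqf:
  fixes S :: "nat set" assumes "\<And>q. q \<in> S \<Longrightarrow> prime q"
  shows "squarefree (\<Prod>q\<in>S. q)"
  using assms by (intro squarefree_prod_coprime) (auto intro: primes_coprime squarefree_prime)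

lemma prod_primes_pf:
  fixes S :: "nat set" assumes "finite S" "\<And>q. q \<in> S \<Longrightarrow> prime q"
  shows "prime_factors (\<Prod>q\<in>S. q) = S"
proof -
  have "(\<Prod>q\<in>S. q) \<noteq> 0" using prod_primes_pos[of S] assms(2) by (metis not_less0)
  then have "prime_factors (\<Prod>q\<in>S. q) = {p. prime p \<and> p dvd (\<Prod>q\<in>S. q)}" by (rule prime_factors_dvd)
  then show ?thesis using prod_primes_dvd_iff[OF assms] assms(2) by auto
qed

lemma mu_prod_primes:
  fixes S :: "nat set" assumes "finite S" "\<And>q. q \<in> S \<Longrightarrow> prime q"
  shows "moebius_mu (\<Prod>q\<in>S. q) = (-1) ^ card S"
proof -
  have "0 \<notin> S" using assms(2) by force
  then show ?thesis
  using assms prod_primes_pf[OF assms] prod_primes_pos[of S] prod_primes_sqf[of S]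
  by (simp add: moebius_mu_def)
qed

lemma coprime_prod_primes:
  fixes S T :: "nat set" assumes "finite S" "finite T" "\<And>q. q \<in> S \<Longrightarrow> prime q"
   "\<And>q. q \<in> T \<Longrightarrow> prime q" "S \<inter> T = {}"
  shows "coprime (\<Prod>q\<in>S. q) (\<Prod>q\<in>T. q)"
  using assms by (intro prod_coprime_left prod_coprime_right) (auto intro: primes_coprime)



definition tup :: "nat \<Rightarrow> (nat \<Rightarrow> nat) set" where
 "tup J = {d. (\<forall>j\<in>{1..J}. d j > 0) \<and> (\<forall>j1\<in>{1..J}. \<forall>j2\<in>{1..J}. j1 \<noteq> j2 \<longrightarrow> coprime (d j1) (d j2)) \<and> (\<forall>j. j\<notin>{1..J} \<longrightarrow> d j = 1)}"
definition QN :: "nat \<Rightarrow> nat \<Rightarrow> (nat \<Rightarrow> nat) set" where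
  "QN J N = {d\<in>tup J. \<forall>j\<in>{1..J}. squarefree (d j) \<and> (\<forall>p. prime p \<and> p dvd d j \<longrightarrow> p \<le> N)}"
definition wt :: "nat \<Rightarrow> (nat\<Rightarrow>nat) \<Rightarrow> real" where
  "wt J d = (\<Prod>j\<in>{1..J}. real_of_int (moebius_mu (d j)))"
definition Dp :: "nat \<Rightarrow> (nat\<Rightarrow>nat) \<Rightarrow> real" where
  "Dp J d = (\<Prod>j\<in>{1..J}. real (d j))"
definition Pr :: "nat \<Rightarrow> nat set" where "Pr N = {p. prime p \<and> p \<le> N}"
definition Em :: "nat \<Rightarrow> nat \<Rightarrow> (nat \<Rightarrow> nat) \<Rightarrow> (nat \<Rightarrow> nat)" where
  "Em J N \<sigma> = (\<lambda>j. if j \<in> {1..J} then \<Prod>p\<in>{p\<in>Pr N. \<sigma> p = j}. p else 1)"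

lemma finite_Pr: "finite (Pr N)"
  by (rule finite_subset[of _ "{..N}"]) (auto simp: Pr_def)

lemma Pr_prime: "p \<in> Pr N \<Longrightarrow> prime p" by (simp add: Pr_def)

lemma Em_dvd:
  assumes "j \<in> {1..J}" "prime p"
  shows "p dvd Em J N \<sigma> j \<longleftrightarrow> p \<in> Pr N \<and> \<sigma> p = j"
proof -
  have "p dvd (\<Prod>q\<in>{p\<in>Pr N. \<sigma> p = j}. q) \<longleftrightarrow> p \<in> {p\<in>Pr N. \<sigma> p = j}"
    by (rule prod_primes_dvd_iff) (use finite_Pr assms in \<open>auto simp: Pr_def\<close>)
  then show ?thesis using assms by (simp add: Em_def)
qed

lemma Em_in:
  assumes "\<sigma> \<in> PiE (Pr N) (\<lambda>_. {0..J})"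
  shows "Em J N \<sigma> \<in> QN J N"
proof -
  have fin: "finite {p\<in>Pr N. \<sigma> p = j}" for j using finite_Pr by simp
  have pr: "prime q" if "q \<in> {p\<in>Pr N. \<sigma> p = j}" for q j using that by (auto simp: Pr_def)
  show ?thesis unfolding QN_def tup_def
  proof (intro CollectI conjI ballI allI impI)
    fix j assume j: "j \<in> {1..J}"
    have "(\<Prod>q\<in>{p\<in>Pr N. \<sigma> p = j}. q) > 0" by (rule prod_primes_pos) (auto simp: Pr_def)
    then show "Em J N \<sigma> j > 0" using j by (simp add: Em_def)
    have "squarefree (\<Prod>q\<in>{p\<in>Pr N. \<sigma> p = j}. q)" by (rule prod_primes_sqf) (auto simp: Pr_def)
    then show "squarefree (Em J N \<sigma> j)" using j by (simp add: Em_def)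
    fix p assume "prime p \<and> p dvd Em J N \<sigma> j"
    then show "p \<le> N" using Em_dvd[OF j] by (auto simp: Pr_def)
  next
    fix j1 j2 assume j: "j1 \<in> {1..J}" "j2 \<in> {1..J}" "j1 \<noteq> j2"
    then show "coprime (Em J N \<sigma> j1) (Em J N \<sigma> j2)"
      unfolding Em_def using coprime_prod_primes[OF fin fin pr[of _ j1] pr[of _ j2]] by auto
  next
    fix j :: nat assume "j \<notin> {1..J}" then show "Em J N \<sigma> j = 1" unfolding Em_def by auto
  qed
qed

lemma Em_inj: "inj_on (Em J N) (PiE (Pr N) (\<lambda>_. {0..J}))"
proof (rule inj_onI)
  fix \<sigma> \<tau> assume s: "\<sigma> \<in> PiE (Pr N) (\<lambda>_. {0..J})" and t: "\<tau> \<in> PiE (Pr N) (\<lambda>_. {0..J})"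
    and eq: "Em J N \<sigma> = Em J N \<tau>"
  show "\<sigma> = \<tau>"
  proof (rule ext)
    fix p show "\<sigma> p = \<tau> p"
    proof (cases "p \<in> Pr N")
      case False then show ?thesis using s t by (auto simp: PiE_def extensional_def)
    next
      case True
      have pp: "prime p" using True by (simp add: Pr_def)
      have key: "\<tau>' p = j" if "\<sigma>' p = j" "j \<noteq> 0" "\<sigma>' \<in> PiE (Pr N) (\<lambda>_. {0..J})"
           "Em J N \<sigma>' = Em J N \<tau>'" for \<sigma>' \<tau>' j
      proof -
        have j: "j \<in> {1..J}" using that True by (auto simp: PiE_def Pi_def)
        have "p dvd Em J N \<sigma>' j" using that(1) True by (simp add: Em_dvd[OF j pp])
        then have "p dvd Em J N \<tau>' j" using that by simp
        then show ?thesis using Em_dvd[OF j pp] by simp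
      qed
      show ?thesis
      proof (cases "\<sigma> p = 0")
        case True
        show ?thesis
        proof (rule ccontr)
          assume "\<sigma> p \<noteq> \<tau> p"
          then have "\<sigma> p = \<tau> p" using key[of \<tau> "\<tau> p" \<sigma>] True t eq by auto
          with \<open>\<sigma> p \<noteq> \<tau> p\<close> show False by simp
        qed
      next
        case False then show ?thesis using key[of \<sigma> "\<sigma> p" \<tau>] s eq by auto
      qed
    qed
  qed
qed



lemma Em_surj:
  assumes d: "d \<in> QN J N"
  shows "d \<in> Em J N ` (PiE (Pr N) (\<lambda>_. {0..J}))"
proof -
  have dpos: "d j > 0" if "j \<in> {1..J}" for j using d that by (auto simp: QN_def tup_def)
  have uniq: "j1 = j2" if "j1 \<in> {1..J}" "j2 \<in> {1..J}" "prime p" "p dvd d j1" "p dvd d j2" for j1 j2 p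
  proof (rule ccontr)
    assume "j1 \<noteq> j2"
    then have "coprime (d j1) (d j2)" using d that by (auto simp: QN_def tup_def)
    then have "is_unit p" using that coprime_common_divisor[of "d j1" "d j2" p] by blast
    then show False using that(3) by simp
  qed
  define \<sigma> where "\<sigma> p = (if p \<in> Pr N then (if \<exists>j\<in>{1..J}. p dvd d j then (THE j. j\<in>{1..J} \<and> p dvd d j) else 0) else undefined)" for p
  have the_eq: "(THE j. j\<in>{1..J} \<and> p dvd d j) = j0" if "prime p" "j0 \<in> {1..J}" "p dvd d j0" for p j0
  proof (rule the_equality)
    show "j0 \<in> {1..J} \<and> p dvd d j0" using that by simp
    fix j' assume "j' \<in> {1..J} \<and> p dvd d j'"
    then show "j' = j0" using uniq[of j' j0 p] that by blast
  qed
  have sig: "\<sigma> p = j \<longleftrightarrow> p dvd d j" if "p \<in> Pr N" "j \<in> {1..J}" for p j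
  proof
    assume "p dvd d j"
    then have "(THE j. j\<in>{1..J} \<and> p dvd d j) = j"
      using that the_eq[of p j] by (simp add: Pr_def)
    then show "\<sigma> p = j" using that \<open>p dvd d j\<close> by (auto simp: \<sigma>_def)
  next
    assume "\<sigma> p = j"
    then have ex: "\<exists>j\<in>{1..J}. p dvd d j" using that by (auto simp: \<sigma>_def split: if_splits)
    then obtain j0 where j0: "j0 \<in> {1..J}" "p dvd d j0" by blast
    have "(THE j. j\<in>{1..J} \<and> p dvd d j) = j0"
      using that j0 the_eq[of p j0] by (simp add: Pr_def)
    moreover have "\<sigma> p = (THE j. j\<in>{1..J} \<and> p dvd d j)" using ex that(1) by (simp add: \<sigma>_def)
    ultimately have "j = j0" using \<open>\<sigma> p = j\<close> by simp
    then show "p dvd d j" using j0 by simp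
  qed
  have sigin: "\<sigma> \<in> PiE (Pr N) (\<lambda>_. {0..J})"
  proof -
    have "\<sigma> p \<in> {0..J}" if "p \<in> Pr N" for p
    proof (cases "\<exists>j\<in>{1..J}. p dvd d j")
      case True
      then obtain j0 where j0: "j0 \<in> {1..J}" "p dvd d j0" by blast
      then have "\<sigma> p = j0" using sig that by blast
      then show ?thesis using j0 by simp
    next
      case False then show ?thesis using that by (simp add: \<sigma>_def)
    qed
    moreover have "\<sigma> p = undefined" if "p \<notin> Pr N" for p using that by (simp add: \<sigma>_def)
    ultimately show ?thesis by (auto simp: PiE_iff extensional_def)
  qed
  have "Em J N \<sigma> = d"
  proof (rule ext)
    fix j show "Em J N \<sigma> j = d j"
    proof (cases "j \<in> {1..J}")
      case False then show ?thesis using d by (auto simp: Em_def QN_def tup_def)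
    next
      case True
      have "{p\<in>Pr N. \<sigma> p = j} = prime_factors (d j)"
      proof (intro equalityI subsetI)
        fix p assume "p \<in> {p\<in>Pr N. \<sigma> p = j}"
        then show "p \<in> prime_factors (d j)" using sig[of p j] True dpos[OF True]
          by (auto simp: Pr_def in_prime_factors_iff)
      next
        fix p assume p: "p \<in> prime_factors (d j)"
        then have "p \<in> Pr N" using d True by (auto simp: Pr_def QN_def in_prime_factors_iff)
        then show "p \<in> {p\<in>Pr N. \<sigma> p = j}" using sig[of p j] True p by auto
      qed
      then show ?thesis using True sqf_prod_pf[of "d j"] dpos[OF True] d
        by (auto simp: Em_def QN_def)
    qed
  qed
  then show ?thesis using sigin by blast
qed

lemma Em_bij: "bij_betw (Em J N) (PiE (Pr N) (\<lambda>_. {0..J})) (QN J N)"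
  unfolding bij_betw_def
proof
  show "inj_on (Em J N) (PiE (Pr N) (\<lambda>_. {0..J}))" by (rule Em_inj)
  show "Em J N ` (PiE (Pr N) (\<lambda>_. {0..J})) = QN J N"
  proof
    show "Em J N ` (PiE (Pr N) (\<lambda>_. {0..J})) \<subseteq> QN J N" using Em_in by blast
    show "QN J N \<subseteq> Em J N ` (PiE (Pr N) (\<lambda>_. {0..J}))" using Em_surj by blast
  qed
qed



definition cf :: "nat \<Rightarrow> nat \<Rightarrow> nat \<Rightarrow> real" where
  "cf a p k = (if k = 0 then 1 else - 1 / real p ^ a)"

lemma Em_val:
  assumes s: "\<sigma> \<in> PiE (Pr N) (\<lambda>_. {0..J})"
  shows "wt J (Em J N \<sigma>) / Dp J (Em J N \<sigma>) ^ a = (\<Prod>p\<in>Pr N. cf a p (\<sigma> p))"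
proof -
  define S where "S j = {p\<in>Pr N. \<sigma> p = j}" for j
  have finS: "finite (S j)" for j unfolding S_def using finite_Pr by simp
  have prS: "prime q" if "q \<in> S j" for q j using that by (simp add: S_def Pr_def)
  have Em: "Em J N \<sigma> j = (\<Prod>q\<in>S j. q)" if "j \<in> {1..J}" for j using that by (simp add: Em_def S_def)
  have "wt J (Em J N \<sigma>) / Dp J (Em J N \<sigma>) ^ a =
        (\<Prod>j\<in>{1..J}. real_of_int (moebius_mu (Em J N \<sigma> j)) / real (Em J N \<sigma> j) ^ a)"
    unfolding wt_def Dp_def by (simp add: prod_dividef prod_power_distrib)
  also have "\<dots> = (\<Prod>j\<in>{1..J}. \<Prod>p\<in>S j. (- 1 / real p ^ a))"
  proof (rule prod.cong[OF refl])
    fix j assume j: "j \<in> {1..J}"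
    have "real_of_int (moebius_mu (Em J N \<sigma> j)) = (-1) ^ card (S j)"
      using Em[OF j] mu_prod_primes[OF finS prS] by simp
    moreover have "real (Em J N \<sigma> j) ^ a = (\<Prod>p\<in>S j. real p ^ a)"
      using Em[OF j] by (simp add: prod_power_distrib)
    moreover have "(\<Prod>p\<in>S j. (- 1 / real p ^ a)) = (\<Prod>p\<in>S j. (- 1::real)) / (\<Prod>p\<in>S j. real p ^ a)"
      by (rule prod_dividef)
    ultimately show "real_of_int (moebius_mu (Em J N \<sigma> j)) / real (Em J N \<sigma> j) ^ a = (\<Prod>p\<in>S j. (- 1 / real p ^ a))"
      by simp
  qed
  also have "\<dots> = (\<Prod>j\<in>{1..J}. \<Prod>p\<in>{x. x \<in> {p\<in>Pr N. \<sigma> p \<noteq> 0} \<and> \<sigma> x = j}. (- 1 / real p ^ a))"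
    by (intro prod.cong refl) (auto simp: S_def)
  also have "\<dots> = (\<Prod>p\<in>{p\<in>Pr N. \<sigma> p \<noteq> 0}. (- 1 / real p ^ a))"
  proof (rule prod.group)
    show "finite {p\<in>Pr N. \<sigma> p \<noteq> 0}" using finite_Pr by simp
    show "\<sigma> ` {p\<in>Pr N. \<sigma> p \<noteq> 0} \<subseteq> {1..J}" using s by (auto simp: PiE_def Pi_def)
  qed simp
  also have "\<dots> = (\<Prod>p\<in>Pr N. cf a p (\<sigma> p))"
    by (subst prod.inter_filter[OF finite_Pr]) (auto simp: cf_def intro!: prod.cong)
  finally show ?thesis .
qed

lemma cf_sum: "(\<Sum>k\<in>{0..J}. cf a p k) = 1 - real J / real p ^ a"
proof -
  have "{0..J} = insert 0 {1..J}" by auto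
  then have "(\<Sum>k\<in>{0..J}. cf a p k) = 1 + (\<Sum>k\<in>{1..J}. cf a p k)" by (simp add: cf_def)
  also have "(\<Sum>k\<in>{1..J}. cf a p k) = (\<Sum>k\<in>{1..J}. - 1 / real p ^ a)"
    by (intro sum.cong) (auto simp: cf_def)
  finally show ?thesis by simp
qed

lemma euler_finite:
  "finite (QN J N) \<and> (\<Prod>p\<in>{p. prime p \<and> p \<le> N}. 1 - real J / real p ^ a) = (\<Sum>d\<in>QN J N. wt J d / Dp J d ^ a)"
proof
  have bij: "bij_betw (Em J N) (PiE (Pr N) (\<lambda>_. {0..J})) (QN J N)" by (rule Em_bij)
  show "finite (QN J N)"
    using bij_betw_finite[OF bij] finite_PiE[of "Pr N" "\<lambda>_. {0..J}"] finite_Pr by simp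
  have "(\<Sum>d\<in>QN J N. wt J d / Dp J d ^ a) = (\<Sum>\<sigma>\<in>PiE (Pr N) (\<lambda>_. {0..J}). wt J (Em J N \<sigma>) / Dp J (Em J N \<sigma>) ^ a)"
    using sum.reindex_bij_betw[OF bij, of "\<lambda>d. wt J d / Dp J d ^ a"] by simp
  also have "\<dots> = (\<Sum>\<sigma>\<in>PiE (Pr N) (\<lambda>_. {0..J}). \<Prod>p\<in>Pr N. cf a p (\<sigma> p))"
    by (intro sum.cong refl Em_val)
  also have "\<dots> = (\<Prod>p\<in>Pr N. \<Sum>k\<in>{0..J}. cf a p k)"
    by (rule prod_sum_PiE[symmetric]) (auto simp: finite_Pr)
  also have "\<dots> = (\<Prod>p\<in>{p. prime p \<and> p \<le> N}. 1 - real J / real p ^ a)"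
    by (simp add: cf_sum Pr_def)
  finally show "(\<Prod>p\<in>{p. prime p \<and> p \<le> N}. 1 - real J / real p ^ a) = (\<Sum>d\<in>QN J N. wt J d / Dp J d ^ a)" ..
qed



definition TY :: "nat \<Rightarrow> nat \<Rightarrow> (nat \<Rightarrow> nat) set" where
  "TY J Y = {d\<in>tup J. \<forall>j\<in>{1..J}. d j \<le> Y}"
definition SY :: "nat \<Rightarrow> nat \<Rightarrow> nat \<Rightarrow> real" where
  "SY J a Y = (\<Sum>d\<in>TY J Y. wt J d / Dp J d ^ a)"
definition EP :: "nat \<Rightarrow> nat \<Rightarrow> nat \<Rightarrow> real" where
  "EP J a N = (\<Prod>p\<in>{p. prime p \<and> p \<le> N}. 1 - real J / real p ^ a)"

lemma TY_sub_box: "TY J Y \<subseteq> box {1..J} (\<lambda>_. {1..Y})"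
  by (auto simp: TY_def tup_def box_def Suc_le_eq)

lemma finite_TY: "finite (TY J Y)"
  by (rule finite_subset[OF TY_sub_box finite_box]) auto

lemma abs_mu_le: "\<bar>moebius_mu n\<bar> \<le> 1"
  by (simp add: moebius_mu_def power_abs)

lemma abs_wt_le: "\<bar>wt J d\<bar> \<le> 1"
  unfolding wt_def abs_prod using abs_mu_le
  by (intro prod_le_1) (auto simp del: of_int_abs simp: of_int_abs[symmetric])

lemma wt_zero: "j \<in> {1..J} \<Longrightarrow> \<not> squarefree (d j) \<Longrightarrow> wt J d = 0"
  unfolding wt_def by (rule prod_zero) (auto simp: moebius_mu_def intro!: bexI[of _ j])

lemma Dp_ge1: "d \<in> tup J \<Longrightarrow> Dp J d \<ge> 1"
  unfolding Dp_def tup_def by (intro prod_ge_1) (auto simp: Suc_le_eq)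

lemma term_le:
  assumes "d \<in> tup J" "a \<ge> 2"
  shows "\<bar>wt J d / Dp J d ^ a\<bar> \<le> (\<Prod>j\<in>{1..J}. 1 / real (d j) ^ 2)"
proof -
  have D: "Dp J d \<ge> 1" by (rule Dp_ge1[OF assms(1)])
  have "\<bar>wt J d / Dp J d ^ a\<bar> = \<bar>wt J d\<bar> / Dp J d ^ a" using D by (simp add: abs_divide)
  also have "\<dots> \<le> 1 / Dp J d ^ a" using D abs_wt_le[of J d] by (intro divide_right_mono) auto
  also have "\<dots> \<le> 1 / Dp J d ^ 2" using D assms(2)
    by (intro divide_left_mono power_increasing mult_pos_pos) auto
  also have "\<dots> = (\<Prod>j\<in>{1..J}. 1 / real (d j) ^ 2)"
    unfolding Dp_def by (simp add: prod_dividef prod_power_distrib)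
  finally show ?thesis .
qed

lemma EP_SY:
  assumes a: "a \<ge> 2" and Y: "Y \<ge> 1" and N: "N \<ge> Y"
  shows "\<bar>EP J a N - SY J a Y\<bar> \<le> real J * 2^J / real Y"
proof -
  have fQ: "finite (QN J N)" and EPQ: "EP J a N = (\<Sum>d\<in>QN J N. wt J d / Dp J d ^ a)"
    using euler_finite[of J N a] by (auto simp: EP_def)
  have SYQ: "SY J a Y = (\<Sum>d\<in>TY J Y \<inter> QN J N. wt J d / Dp J d ^ a)"
    unfolding SY_def
  proof (rule sum.mono_neutral_right[OF finite_TY])
    show "TY J Y \<inter> QN J N \<subseteq> TY J Y" by blast
    show "\<forall>d\<in>TY J Y - TY J Y \<inter> QN J N. wt J d / Dp J d ^ a = 0"
    proof
      fix d assume d: "d \<in> TY J Y - TY J Y \<inter> QN J N"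
      have "\<exists>j\<in>{1..J}. \<not> squarefree (d j)"
      proof (rule ccontr)
        assume "\<not> (\<exists>j\<in>{1..J}. \<not> squarefree (d j))"
        then have sq: "\<forall>j\<in>{1..J}. squarefree (d j)" by blast
        have "\<forall>j\<in>{1..J}. \<forall>p. prime p \<and> p dvd d j \<longrightarrow> p \<le> N"
        proof (intro ballI allI impI)
          fix j p assume j: "j \<in> {1..J}" and p: "prime p \<and> p dvd d j"
          have "d j > 0" "d j \<le> Y" using d j by (auto simp: TY_def tup_def)
          then have "p \<le> d j" using p dvd_imp_le by blast
          then show "p \<le> N" using \<open>d j \<le> Y\<close> N by simp
        qed
        then have "d \<in> QN J N" using sq d by (auto simp: QN_def TY_def)
        then show False using d by blast
      qed
      then show "wt J d / Dp J d ^ a = 0" using wt_zero by force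
    qed
  qed
  have "EP J a N = SY J a Y + (\<Sum>d\<in>QN J N - TY J Y. wt J d / Dp J d ^ a)"
    unfolding EPQ SYQ using sum.Int_Diff[OF fQ, of _ "TY J Y"] by (simp add: Int_commute)
  then have "\<bar>EP J a N - SY J a Y\<bar> = \<bar>\<Sum>d\<in>QN J N - TY J Y. wt J d / Dp J d ^ a\<bar>" by simp
  also have "\<dots> \<le> (\<Sum>d\<in>QN J N - TY J Y. \<bar>wt J d / Dp J d ^ a\<bar>)" by (rule sum_abs)
  also have "\<dots> \<le> (\<Sum>d\<in>QN J N - TY J Y. \<Prod>j\<in>{1..J}. 1 / real (d j) ^ 2)"
    using a by (intro sum_mono term_le) (auto simp: QN_def)
  also have "\<dots> \<le> real J * 2^J / real Y"
  proof (rule tail_bound)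
    show "finite (QN J N - TY J Y)" using fQ by simp
    fix d assume "d \<in> QN J N - TY J Y"
    then show "(\<forall>j\<in>{1..J}. d j \<ge> 1) \<and> (\<forall>j. j\<notin>{1..J} \<longrightarrow> d j = 1) \<and> (\<exists>j\<in>{1..J}. d j > Y)"
      by (auto simp: QN_def TY_def tup_def Suc_le_eq not_le intro: bexI)
  qed (rule Y)
  finally show ?thesis .
qed

lemma P_exists:
  assumes a: "a \<ge> 2"
  shows "\<exists>P. (\<lambda>N. EP J a N) \<longlonglongrightarrow> P \<and> (\<forall>Y\<ge>1. \<bar>SY J a Y - P\<bar> \<le> real J * 2^J / real Y)"
proof -
  define K where "K = real J * 2^J"
  have K: "K \<ge> 0" by (simp add: K_def)
  have "Cauchy (\<lambda>N. EP J a N)"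
  proof (rule metric_CauchyI)
    fix e :: real assume e: "e > 0"
    define Y where "Y = nat \<lceil>2 * K / e\<rceil> + 1"
    have Y1: "Y \<ge> 1" by (simp add: Y_def)
    have "2 * K / e < real Y" unfolding Y_def by linarith
    then have "2 * K < e * real Y" using e by (simp add: field_simps)
    then have lt: "2 * (K / real Y) < e" using Y1 by (simp add: field_simps)
    show "\<exists>M. \<forall>m\<ge>M. \<forall>n\<ge>M. dist (EP J a m) (EP J a n) < e"
    proof (intro exI allI impI)
      fix m n assume "m \<ge> Y" "n \<ge> Y"
      then have "\<bar>EP J a m - SY J a Y\<bar> \<le> K / real Y" "\<bar>EP J a n - SY J a Y\<bar> \<le> K / real Y"
        using EP_SY[OF a Y1] by (auto simp: K_def)
      then show "dist (EP J a m) (EP J a n) < e" using lt by (simp add: dist_real_def)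
    qed
  qed
  then obtain P where P: "(\<lambda>N. EP J a N) \<longlonglongrightarrow> P"
    using Cauchy_convergent_iff convergent_def by blast
  have "\<bar>SY J a Y - P\<bar> \<le> K / real Y" if Y: "Y \<ge> 1" for Y
  proof -
    have "(\<lambda>N. \<bar>EP J a N - SY J a Y\<bar>) \<longlonglongrightarrow> \<bar>P - SY J a Y\<bar>"
      by (intro tendsto_intros P)
    then have "\<bar>P - SY J a Y\<bar> \<le> K / real Y"
      by (rule LIMSEQ_le_const2) (use EP_SY[OF a Y] in \<open>auto simp: K_def\<close>)
    then show ?thesis by simp
  qed
  then show ?thesis using P by (auto simp: K_def)
qed



lemma count_ap:
  fixes lo hi r M :: int
  assumes M: "M > 0" and lh: "lo \<le> hi"
  shows "\<bar>real (card {n\<in>{lo<..hi}. M dvd (n - r)}) - real_of_int (hi - lo) / real_of_int M\<bar> \<le> 1"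
proof -
  define u where "u = real_of_int (hi - r) / real_of_int M"
  define v where "v = real_of_int (lo - r) / real_of_int M"
  have Mr: "real_of_int M > 0" using M by simp
  have eq: "{n\<in>{lo<..hi}. M dvd (n - r)} = (\<lambda>k. r + k * M) ` {\<lfloor>v\<rfloor><..\<lfloor>u\<rfloor>}"
  proof (intro equalityI subsetI)
    fix n assume n: "n \<in> {n\<in>{lo<..hi}. M dvd (n - r)}"
    then obtain k where k: "n - r = M * k" by (auto elim: dvdE)
    have "real_of_int k * real_of_int M \<le> real_of_int (hi - r)"
      using n k by (simp flip: of_int_mult add: mult.commute)
    then have "k \<le> \<lfloor>u\<rfloor>" unfolding u_def using Mr by (simp add: le_floor_iff pos_le_divide_eq)
    moreover have "real_of_int (lo - r) < real_of_int k * real_of_int M"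
      using n k by (simp flip: of_int_mult add: mult.commute)
    then have "\<lfloor>v\<rfloor> < k" unfolding v_def using Mr by (simp add: floor_less_iff pos_divide_less_eq)
    ultimately show "n \<in> (\<lambda>k. r + k * M) ` {\<lfloor>v\<rfloor><..\<lfloor>u\<rfloor>}"
      using k by (intro image_eqI[of _ _ k]) (auto simp: algebra_simps)
  next
    fix n assume "n \<in> (\<lambda>k. r + k * M) ` {\<lfloor>v\<rfloor><..\<lfloor>u\<rfloor>}"
    then obtain k where kk: "k \<in> {\<lfloor>v\<rfloor><..\<lfloor>u\<rfloor>}" and k1: "n = r + k * M" by (rule imageE)
    then have k: "n = r + k * M" "\<lfloor>v\<rfloor> < k" "k \<le> \<lfloor>u\<rfloor>" by auto
    have "real_of_int k * real_of_int M \<le> real_of_int (hi - r)"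
      using k(3) unfolding u_def using Mr by (simp add: le_floor_iff pos_le_divide_eq)
    then have 1: "n \<le> hi" using k(1) by (simp flip: of_int_mult)
    have "real_of_int (lo - r) < real_of_int k * real_of_int M"
      using k(2) unfolding v_def using Mr by (simp add: floor_less_iff pos_divide_less_eq)
    then have 2: "lo < n" using k(1) by (simp flip: of_int_mult)
    show "n \<in> {n\<in>{lo<..hi}. M dvd (n - r)}" using 1 2 k(1) by auto
  qed
  have inj: "inj_on (\<lambda>k. r + k * M) {\<lfloor>v\<rfloor><..\<lfloor>u\<rfloor>}" using M by (auto simp: inj_on_def)
  have vu: "v \<le> u" unfolding u_def v_def using Mr lh by (intro divide_right_mono) auto
  then have fl: "\<lfloor>v\<rfloor> \<le> \<lfloor>u\<rfloor>" by (rule floor_mono)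
  have "card {n\<in>{lo<..hi}. M dvd (n - r)} = nat (\<lfloor>u\<rfloor> - \<lfloor>v\<rfloor>)"
    unfolding eq card_image[OF inj] by simp
  then have c: "real (card {n\<in>{lo<..hi}. M dvd (n - r)}) = real_of_int \<lfloor>u\<rfloor> - real_of_int \<lfloor>v\<rfloor>"
    using fl by simp
  have uv: "u - v = real_of_int (hi - lo) / real_of_int M" unfolding u_def v_def by (simp add: diff_divide_distrib)
  have "u - 1 < real_of_int \<lfloor>u\<rfloor>" "real_of_int \<lfloor>u\<rfloor> \<le> u" "v - 1 < real_of_int \<lfloor>v\<rfloor>" "real_of_int \<lfloor>v\<rfloor> \<le> v"
    by linarith+
  then show ?thesis unfolding c uv[symmetric] by linarith
qed

lemma prod_dvd_pairwise_coprime: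
  fixes f :: "nat \<Rightarrow> int"
  assumes "finite A" "\<And>i j. i \<in> A \<Longrightarrow> j \<in> A \<Longrightarrow> i \<noteq> j \<Longrightarrow> coprime (f i) (f j)"
    "\<And>i. i \<in> A \<Longrightarrow> f i dvd x"
  shows "prod f A dvd x"
  using assms
proof (induction A rule: finite_induct)
  case (insert i A)
  have "coprime (f i) (prod f A)"
    using insert.prems(1) insert.hyps by (intro prod_coprime_right) auto
  moreover have "prod f A dvd x" using insert by auto
  ultimately show ?case using insert.prems(2) insert.hyps by (simp add: divides_mult)
qed simp

lemma crt_tup:
  fixes s :: "nat \<Rightarrow> int"
  assumes d: "d \<in> tup J"
  shows "\<exists>r::int. \<forall>n. (\<forall>j\<in>{1..J}. int (d j ^ b1) dvd (n - s j)) \<longleftrightarrow> (\<Prod>j\<in>{1..J}. int (d j ^ b1)) dvd (n - r)"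
proof -
  define m where "m j = d j ^ b1" for j
  have mpos: "m j > 0" if "j \<in> {1..J}" for j using d that by (simp add: m_def tup_def)
  have cop: "\<forall>i\<in>{1..J}. \<forall>j\<in>{1..J}. i \<noteq> j \<longrightarrow> coprime (m i) (m j)"
    using d by (auto simp: m_def tup_def)
  obtain x where x: "\<forall>j\<in>{1..J}. [x = nat (s j mod int (m j))] (mod m j)"
    using chinese_remainder_nat[OF finite_atLeastAtMost cop, of "\<lambda>j. nat (s j mod int (m j))"] by blast
  have rx: "int (m j) dvd (int x - s j)" if j: "j \<in> {1..J}" for j
  proof -
    have "[x = nat (s j mod int (m j))] (mod m j)" using x j by blast
    then have "[int x = int (nat (s j mod int (m j)))] (mod int (m j))"
      by (subst cong_int_iff)
    moreover have "int (nat (s j mod int (m j))) = s j mod int (m j)" using mpos[OF j] by simp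
    ultimately have "[int x = s j mod int (m j)] (mod int (m j))" by simp
    then have "[int x = s j] (mod int (m j))" by (simp add: cong_def)
    then show ?thesis by (simp add: cong_iff_dvd_diff)
  qed
  have "(\<forall>j\<in>{1..J}. int (d j ^ b1) dvd (n - s j)) \<longleftrightarrow> (\<Prod>j\<in>{1..J}. int (d j ^ b1)) dvd (n - int x)" for n
  proof
    assume h: "\<forall>j\<in>{1..J}. int (d j ^ b1) dvd (n - s j)"
    show "(\<Prod>j\<in>{1..J}. int (d j ^ b1)) dvd (n - int x)"
    proof (rule prod_dvd_pairwise_coprime)
      fix i j assume "i \<in> {1..J}" "j \<in> {1..J}" "i \<noteq> j"
      then show "coprime (int (d i ^ b1)) (int (d j ^ b1))" using cop by (simp add: m_def)
    next
      fix j assume j: "j \<in> {1..J}"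
      have "n - int x = (n - s j) - (int x - s j)" by simp
      then show "int (d j ^ b1) dvd (n - int x)" using h j rx[OF j]
        by (metis dvd_diff m_def)
    qed simp
  next
    assume h: "(\<Prod>j\<in>{1..J}. int (d j ^ b1)) dvd (n - int x)"
    show "\<forall>j\<in>{1..J}. int (d j ^ b1) dvd (n - s j)"
    proof
      fix j assume j: "j \<in> {1..J}"
      have "int (d j ^ b1) dvd (n - int x)" using h j by (meson dvd_prodI dvd_trans finite_atLeastAtMost)
      moreover have "n - s j = (n - int x) + (int x - s j)" by simp
      ultimately show "int (d j ^ b1) dvd (n - s j)" using rx[OF j] by (metis dvd_add m_def)
    qed
  qed
  then show ?thesis by blast
qed



lemma s0_ge: "j \<in> {1..J} \<Longrightarrow> \<bar>s j\<bar> \<le> s0 J s"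
  unfolding s0_def by (rule Max_ge) auto

lemma s0_nonneg: "J \<ge> 1 \<Longrightarrow> s0 J s \<ge> 0"
  using s0_ge[of 1 J s] by simp

lemma adm_eq:
  assumes b1: "b1 \<ge> 1" and n: "s0 J s < n" "n \<le> X"
  shows "adm_tuples b1 J s n = {d\<in>TY J (nat (X + s0 J s)). \<forall>j\<in>{1..J}. int (d j ^ b1) dvd (n - s j)}"
proof (intro equalityI subsetI)
  fix d assume d: "d \<in> adm_tuples b1 J s n"
  have "d j \<le> nat (X + s0 J s)" if j: "j \<in> {1..J}" for j
  proof -
    have pos: "d j > 0" and dv: "int (d j ^ b1) dvd (n - s j)" using d j by (auto simp: adm_tuples_def)
    have "n - s j > 0" using s0_ge[OF j, of s] n by linarith
    then have "int (d j ^ b1) \<le> n - s j" using dv by (intro zdvd_imp_le)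
    moreover have "d j \<le> d j ^ b1" using pos b1
      by (intro self_le_power) auto
    moreover have "- s j \<le> s0 J s" using s0_ge[OF j, of s] by linarith
    ultimately have "int (d j) \<le> X + s0 J s" using n by linarith
    then show ?thesis by linarith
  qed
  then show "d \<in> {d\<in>TY J (nat (X + s0 J s)). \<forall>j\<in>{1..J}. int (d j ^ b1) dvd (n - s j)}"
    using d by (auto simp: adm_tuples_def TY_def tup_def)
next
  fix d assume "d \<in> {d\<in>TY J (nat (X + s0 J s)). \<forall>j\<in>{1..J}. int (d j ^ b1) dvd (n - s j)}"
  then show "d \<in> adm_tuples b1 J s n" by (auto simp: adm_tuples_def TY_def tup_def)
qed



lemma sum_swap_f:
  assumes b1: "b1 \<ge> 1"
  shows "(\<Sum>n\<in>{s0 J s<..X}. f_bs b1 b2 J s n) =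
         (\<Sum>d\<in>TY J (nat (X + s0 J s)). wt J d / Dp J d ^ b2 * real (card {n\<in>{s0 J s<..X}. \<forall>j\<in>{1..J}. int (d j ^ b1) dvd (n - s j)}))"
proof -
  define Y where "Y = nat (X + s0 J s)"
  define P where "P d n = (\<forall>j\<in>{1..J}. int (d j ^ b1) dvd (n - s j))" for d n
  define F where "F d = wt J d / Dp J d ^ b2" for d
  have "(\<Sum>n\<in>{s0 J s<..X}. f_bs b1 b2 J s n) = (\<Sum>n\<in>{s0 J s<..X}. \<Sum>d\<in>TY J Y. if P d n then F d else 0)"
  proof (rule sum.cong[OF refl])
    fix n assume n: "n \<in> {s0 J s<..X}"
    have "f_bs b1 b2 J s n = (\<Sum>d\<in>adm_tuples b1 J s n. F d)" by (simp add: f_bs_def wt_def Dp_def F_def)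
    also have "\<dots> = (\<Sum>d\<in>{d\<in>TY J Y. P d n}. F d)" using adm_eq[OF b1, of J s n X] n by (simp add: Y_def P_def)
    also have "\<dots> = (\<Sum>d\<in>TY J Y. if P d n then F d else 0)" by (rule sum.inter_filter[OF finite_TY])
    finally show "f_bs b1 b2 J s n = (\<Sum>d\<in>TY J Y. if P d n then F d else 0)" .
  qed
  also have "\<dots> = (\<Sum>d\<in>TY J Y. \<Sum>n\<in>{s0 J s<..X}. if P d n then F d else 0)" by (rule sum.swap)
  also have "\<dots> = (\<Sum>d\<in>TY J Y. F d * real (card {n\<in>{s0 J s<..X}. P d n}))"
  proof (rule sum.cong[OF refl])
    fix d
    have "(\<Sum>n\<in>{s0 J s<..X}. if P d n then F d else 0) = (\<Sum>n\<in>{n\<in>{s0 J s<..X}. P d n}. F d)"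
      by (rule sum.inter_filter[symmetric]) simp
    then show "(\<Sum>n\<in>{s0 J s<..X}. if P d n then F d else 0) = F d * real (card {n\<in>{s0 J s<..X}. P d n})"
      by simp
  qed
  finally show ?thesis by (simp add: Y_def P_def F_def)
qed

lemma cnt_bound:
  fixes s :: "nat \<Rightarrow> int" and S X :: int
  assumes d: "d \<in> tup J"
  shows "\<bar>real (card {n\<in>{S<..X}. \<forall>j\<in>{1..J}. int (d j ^ b1) dvd (n - s j)}) - real_of_int (max 0 (X - S)) / Dp J d ^ b1\<bar> \<le> 1"
proof -
  obtain r where r: "\<And>n. (\<forall>j\<in>{1..J}. int (d j ^ b1) dvd (n - s j)) \<longleftrightarrow> (\<Prod>j\<in>{1..J}. int (d j ^ b1)) dvd (n - r)"
    using crt_tup[OF d, of b1 s] by blast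
  define M where "M = (\<Prod>j\<in>{1..J}. int (d j ^ b1))"
  have Mpos: "M > 0" unfolding M_def using d by (intro prod_pos) (auto simp: tup_def)
  have MD: "real_of_int M = Dp J d ^ b1" unfolding M_def Dp_def by (simp add: prod_power_distrib)
  have eq: "{n\<in>{S<..X}. \<forall>j\<in>{1..J}. int (d j ^ b1) dvd (n - s j)} = {n\<in>{S<..X}. M dvd (n - r)}"
    using r by (auto simp: M_def)
  show ?thesis
  proof (cases "S \<le> X")
    case True
    then show ?thesis unfolding eq MD[symmetric] using count_ap[OF Mpos True, of r] by simp
  next
    case False
    then show ?thesis by simp
  qed
qed



lemma term_le1:
  assumes "d \<in> tup J" "b \<ge> 1"
  shows "\<bar>wt J d / Dp J d ^ b\<bar> \<le> (\<Prod>j\<in>{1..J}. 1 / real (d j))"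
proof -
  have D: "Dp J d \<ge> 1" by (rule Dp_ge1[OF assms(1)])
  have "\<bar>wt J d / Dp J d ^ b\<bar> = \<bar>wt J d\<bar> / Dp J d ^ b" using D by (simp add: abs_divide)
  also have "\<dots> \<le> 1 / Dp J d ^ b" using D abs_wt_le[of J d] by (intro divide_right_mono) auto
  also have "\<dots> \<le> 1 / Dp J d ^ 1" using D assms(2)
    by (intro divide_left_mono power_increasing mult_pos_pos) auto
  also have "\<dots> = (\<Prod>j\<in>{1..J}. 1 / real (d j))"
    unfolding Dp_def by (simp add: prod_dividef)
  finally show ?thesis .
qed

lemma TY_box_bound:
  assumes "\<And>k. g k \<ge> (0::real)"
  shows "(\<Sum>d\<in>TY J Y. \<Prod>j\<in>{1..J}. g (d j)) \<le> (\<Sum>k\<in>{1..Y}. g k) ^ J"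
proof -
  have "(\<Sum>d\<in>TY J Y. \<Prod>j\<in>{1..J}. g (d j)) \<le> (\<Sum>d\<in>box {1..J} (\<lambda>_. {1..Y}). \<Prod>j\<in>{1..J}. g (d j))"
    by (intro sum_mono2 finite_box TY_sub_box) (auto intro: prod_nonneg assms)
  also have "\<dots> = (\<Prod>j\<in>{1..J}. \<Sum>k\<in>{1..Y}. g k)" by (rule box_sum) auto
  also have "\<dots> = (\<Sum>k\<in>{1..Y}. g k) ^ J" by simp
  finally show ?thesis .
qed

theorem lemma2p7:
  fixes b1 b2 J :: nat and s :: "nat \<Rightarrow> int"
  assumes "b1 \<ge> 1" and "b1 \<le> b2" and "coprime b1 b2" and "J \<ge> 1"
  shows "\<exists>P C. ((\<lambda>N. \<Prod>p\<in>{p. prime p \<and> p \<le> N}. 1 - real J / real p ^ (b1 + b2)) \<longlonglongrightarrow> P) \<and>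
           (\<forall>x::real. x \<ge> 2 \<longrightarrow>
              \<bar>(\<Sum>n\<in>{s0 J s <.. \<lfloor>x\<rfloor>}. f_bs b1 b2 J s n) - x * P\<bar> \<le> C * ln x ^ J)"
proof -
  define a where "a = b1 + b2"
  have a2: "a \<ge> 2" using assms by (simp add: a_def)
  have b2: "b2 \<ge> 1" using assms by simp
  obtain P where Plim: "(\<lambda>N. EP J a N) \<longlonglongrightarrow> P"
    and Pb: "\<forall>Y\<ge>1. \<bar>SY J a Y - P\<bar> \<le> real J * 2^J / real Y"
    using P_exists[OF a2] by blast
  define K where "K = real J * 2^J"
  have K0: "K \<ge> 0" by (simp add: K_def)
  define S0 where "S0 = s0 J s"
  have S0: "S0 \<ge> 0" using s0_nonneg assms(4) by (simp add: S0_def)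
  define c0 where "c0 = 1 + (1 + ln (1 + real_of_int S0)) / ln 2"
  define B where "B = (real_of_int S0 + 1) * 2^J + 2 * K"
  have B0: "B \<ge> 0" using S0 K0 by (simp add: B_def)
  define C where "C = c0 ^ J + B / ln 2 ^ J"
  have main: "\<bar>(\<Sum>n\<in>{s0 J s <.. \<lfloor>x\<rfloor>}. f_bs b1 b2 J s n) - x * P\<bar> \<le> C * ln x ^ J" if x: "x \<ge> 2" for x :: real
  proof -
    define X where "X = \<lfloor>x\<rfloor>"
    define Y where "Y = nat (X + S0)"
    define L where "L = real_of_int (max 0 (X - S0))"
    have X2: "X \<ge> 2" using x by (simp add: X_def le_floor_iff)
    have Y1: "Y \<ge> 1" using X2 S0 by (simp add: Y_def)
    have Yr: "real Y = real_of_int X + real_of_int S0" using X2 S0 by (simp add: Y_def)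
    have Xx: "real_of_int X \<le> x" "x < real_of_int X + 1" unfolding X_def by linarith+
    define cnt where "cnt d = real (card {n\<in>{S0<..X}. \<forall>j\<in>{1..J}. int (d j ^ b1) dvd (n - s j)})" for d
    have sumeq: "(\<Sum>n\<in>{s0 J s<..\<lfloor>x\<rfloor>}. f_bs b1 b2 J s n) = (\<Sum>d\<in>TY J Y. wt J d / Dp J d ^ b2 * cnt d)"
      using sum_swap_f[OF assms(1), where J=J and s=s and X=X] by (simp add: X_def Y_def S0_def cnt_def)
    define E where "E = (\<Sum>d\<in>TY J Y. wt J d / Dp J d ^ b2 * (cnt d - L / Dp J d ^ b1))"
    have decomp: "(\<Sum>d\<in>TY J Y. wt J d / Dp J d ^ b2 * cnt d) = L * SY J a Y + E"
    proof -
      have "(\<Sum>d\<in>TY J Y. wt J d / Dp J d ^ b2 * cnt d) =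
            (\<Sum>d\<in>TY J Y. L * (wt J d / Dp J d ^ a) + wt J d / Dp J d ^ b2 * (cnt d - L / Dp J d ^ b1))"
      proof (rule sum.cong[OF refl])
        fix d assume "d \<in> TY J Y"
        then have D: "Dp J d \<ge> 1" using Dp_ge1 by (auto simp: TY_def)
        then show "wt J d / Dp J d ^ b2 * cnt d = L * (wt J d / Dp J d ^ a) + wt J d / Dp J d ^ b2 * (cnt d - L / Dp J d ^ b1)"
        proof -
          have u: "Dp J d ^ b2 \<noteq> 0" "Dp J d ^ b1 \<noteq> 0" using D by auto
          have "Dp J d ^ a = Dp J d ^ b2 * Dp J d ^ b1" by (simp add: a_def power_add mult.commute)
          then have "wt J d / Dp J d ^ b2 * (L / Dp J d ^ b1) = L * (wt J d / Dp J d ^ a)" by simp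
          then show ?thesis by (simp add: right_diff_distrib)
        qed
      qed
      then show ?thesis by (simp add: sum.distrib SY_def E_def sum_distrib_left)
    qed
    have Ebound: "\<bar>E\<bar> \<le> (1 + ln (real Y)) ^ J"
    proof -
      have "\<bar>E\<bar> \<le> (\<Sum>d\<in>TY J Y. \<bar>wt J d / Dp J d ^ b2 * (cnt d - L / Dp J d ^ b1)\<bar>)"
        unfolding E_def by (rule sum_abs)
      also have "\<dots> \<le> (\<Sum>d\<in>TY J Y. \<Prod>j\<in>{1..J}. 1 / real (d j))"
      proof (rule sum_mono)
        fix d assume d: "d \<in> TY J Y"
        have t: "d \<in> tup J" using d by (simp add: TY_def)
        have c1: "\<bar>cnt d - L / Dp J d ^ b1\<bar> \<le> 1" unfolding cnt_def L_def by (rule cnt_bound[OF t])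
        have c2: "\<bar>wt J d / Dp J d ^ b2\<bar> \<le> (\<Prod>j\<in>{1..J}. 1 / real (d j))" by (rule term_le1[OF t b2])
        have "\<bar>wt J d / Dp J d ^ b2 * (cnt d - L / Dp J d ^ b1)\<bar> = \<bar>wt J d / Dp J d ^ b2\<bar> * \<bar>cnt d - L / Dp J d ^ b1\<bar>"
          by (rule abs_mult)
        also have "\<dots> \<le> (\<Prod>j\<in>{1..J}. 1 / real (d j)) * 1"
          using c1 c2 by (intro mult_mono) (auto intro: prod_nonneg)
        finally show "\<bar>wt J d / Dp J d ^ b2 * (cnt d - L / Dp J d ^ b1)\<bar> \<le> (\<Prod>j\<in>{1..J}. 1 / real (d j))" by simp
      qed
      also have "\<dots> \<le> (\<Sum>k\<in>{1..Y}. 1 / real k) ^ J" by (rule TY_box_bound) simp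
      also have "\<dots> \<le> (1 + ln (real Y)) ^ J"
        by (intro power_mono harm_le_ln Y1 sum_nonneg) auto
      finally show ?thesis .
    qed
    have SYb: "\<bar>SY J a Y\<bar> \<le> 2 ^ J"
    proof -
      have "\<bar>SY J a Y\<bar> \<le> (\<Sum>d\<in>TY J Y. \<bar>wt J d / Dp J d ^ a\<bar>)" unfolding SY_def by (rule sum_abs)
      also have "\<dots> \<le> (\<Sum>d\<in>TY J Y. \<Prod>j\<in>{1..J}. 1 / real (d j) ^ 2)"
        using a2 by (intro sum_mono term_le) (auto simp: TY_def)
      also have "\<dots> \<le> (\<Sum>k\<in>{1..Y}. 1 / real k ^ 2) ^ J" by (rule TY_box_bound) simp
      also have "\<dots> \<le> 2 ^ J" by (intro power_mono sum_inv_sq_le2 sum_nonneg) auto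
      finally show ?thesis .
    qed
    have PY: "\<bar>SY J a Y - P\<bar> \<le> K / real Y" using Pb Y1 by (simp add: K_def)
    have Lx: "\<bar>L - x\<bar> \<le> real_of_int S0 + 1"
    proof (cases "S0 \<le> X")
      case True
      then have "L = real_of_int X - real_of_int S0" by (simp add: L_def)
      then show ?thesis using Xx S0 by linarith
    next
      case False
      then have "L = 0" by (simp add: L_def)
      moreover have "real_of_int X + 1 \<le> real_of_int S0" using False by linarith
      ultimately show ?thesis using Xx x by linarith
    qed
    have xY: "x \<le> 2 * real Y" using Yr Xx x S0 by linarith
    have xPY: "x * \<bar>SY J a Y - P\<bar> \<le> 2 * K"
    proof -
      have "x * \<bar>SY J a Y - P\<bar> \<le> x * (K / real Y)" using PY x by (intro mult_left_mono) auto
      also have "\<dots> = (x / real Y) * K" by simp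
      also have "\<dots> \<le> 2 * K" using xY Y1 K0 by (intro mult_right_mono) (auto simp: divide_le_eq)
      finally show ?thesis .
    qed
    have mainpart: "\<bar>L * SY J a Y - x * P\<bar> \<le> B"
    proof -
      have "L * SY J a Y - x * P = (L - x) * SY J a Y + x * (SY J a Y - P)" by (simp add: algebra_simps)
      then have "\<bar>L * SY J a Y - x * P\<bar> \<le> \<bar>L - x\<bar> * \<bar>SY J a Y\<bar> + x * \<bar>SY J a Y - P\<bar>"
      proof -
        have "\<bar>(L - x) * SY J a Y + x * (SY J a Y - P)\<bar> \<le> \<bar>(L - x) * SY J a Y\<bar> + \<bar>x * (SY J a Y - P)\<bar>"
          by (rule abs_triangle_ineq)
        then show ?thesis using x \<open>L * SY J a Y - x * P = (L - x) * SY J a Y + x * (SY J a Y - P)\<close>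
          by (simp add: abs_mult)
      qed
      also have "\<bar>L - x\<bar> * \<bar>SY J a Y\<bar> \<le> (real_of_int S0 + 1) * 2 ^ J"
        using Lx SYb by (intro mult_mono) auto
      finally show ?thesis using xPY by (simp add: B_def)
    qed
    have ln2: "ln 2 > (0::real)" by simp
    have lnx2: "ln x \<ge> ln 2" using x by simp
    have lnY: "1 + ln (real Y) \<le> c0 * ln x"
    proof -
      have Ypos: "real Y > 0" using Y1 by simp
      have "real Y \<le> x * (1 + real_of_int S0)" using Yr Xx x S0
      proof -
        have "1 * real_of_int S0 \<le> x * real_of_int S0" using x S0 by (intro mult_right_mono) auto
        then show ?thesis using Yr Xx by (simp add: distrib_left)
      qed
      then have "ln (real Y) \<le> ln (x * (1 + real_of_int S0))" using Ypos by simp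
      also have "\<dots> = ln x + ln (1 + real_of_int S0)" using x S0 by (simp add: ln_mult)
      finally have "1 + ln (real Y) \<le> ln x + (1 + ln (1 + real_of_int S0))" by simp
      also have "(1 + ln (1 + real_of_int S0)) \<le> (1 + ln (1 + real_of_int S0)) * (ln x / ln 2)"
      proof -
        have "0 \<le> 1 + ln (1 + real_of_int S0)" using S0 by simp
        moreover have "1 \<le> ln x / ln 2" using lnx2 ln2 by simp
        ultimately show ?thesis by (metis mult_left_mono mult.right_neutral)
      qed
      also have "ln x + (1 + ln (1 + real_of_int S0)) * (ln x / ln 2) = c0 * ln x"
        by (simp add: c0_def field_simps)
      finally show ?thesis by simp
    qed
    have E2: "\<bar>E\<bar> \<le> c0 ^ J * ln x ^ J"
    proof -
      have "0 \<le> 1 + ln (real Y)" using Y1 by simp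
      then have "(1 + ln (real Y)) ^ J \<le> (c0 * ln x) ^ J" using lnY by (intro power_mono) auto
      then show ?thesis using Ebound by (simp add: power_mult_distrib)
    qed
    have B2: "B \<le> B / ln 2 ^ J * ln x ^ J"
    proof -
      have "ln 2 ^ J \<le> ln x ^ J" using lnx2 ln2 by (intro power_mono) auto
      then have "1 \<le> ln x ^ J / ln 2 ^ J" using ln2 by simp
      then have "B * 1 \<le> B * (ln x ^ J / ln 2 ^ J)" using B0 by (intro mult_left_mono) auto
      then show ?thesis by simp
    qed
    have "(\<Sum>n\<in>{s0 J s<..\<lfloor>x\<rfloor>}. f_bs b1 b2 J s n) - x * P = E + (L * SY J a Y - x * P)"
      using sumeq decomp by simp
    then have "\<bar>(\<Sum>n\<in>{s0 J s<..\<lfloor>x\<rfloor>}. f_bs b1 b2 J s n) - x * P\<bar> \<le> \<bar>E\<bar> + \<bar>L * SY J a Y - x * P\<bar>"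
      by simp
    also have "\<dots> \<le> c0 ^ J * ln x ^ J + B / ln 2 ^ J * ln x ^ J" using E2 mainpart B2 by linarith
    also have "\<dots> = C * ln x ^ J" by (simp add: C_def algebra_simps)
    finally show ?thesis .
  qed
  have "(\<lambda>N. \<Prod>p\<in>{p. prime p \<and> p \<le> N}. 1 - real J / real p ^ (b1 + b2)) \<longlonglongrightarrow> P"
    using Plim by (simp add: EP_def a_def)
  then show ?thesis using main by blast
qed


end
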